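(* Let $\mathcal{H}=\operatorname{coh}\mathbb{X}$ for a weighted projective line of weight type $(p_1,\ldots,p_t)$, where $p_1,\ldots,p_r$ are even and $p_{r+1},\ldots,p_t$ are odd, and $\mathcal{C}=\mathcal{C}(\mathcal{H})$. (i) If $r\ge1$, then the linear forms (on $\overline{K}_0(\mathcal{C})$ induced by) $\langle\hat s_1,-\rangle,\ \langle\tilde s_2-\tilde s_1,-\rangle,\ldots,\langle\tilde s_r-\tilde s_1,-\rangle$ form a $\mathbb{Z}$-basis of $\overline{K}_0(\mathcal{C})^*=\operatorname{Hom}(\overline{K}_0(\mathcal{C}),\mathbb{Z})$, where $\hat s_1=\sum_{j=0}^{p_1-1}(-1)^j\Phi^js_1$ and $\tilde s_i=\sum_{j=0}^{p_i/2-1}\Phi^{2j}s_i$. (ii) If $r=0$, then $\operatorname{rk}_2$ and $\deg_2$ form a $\mathbb{Z}_2$-basis of $\overline{K}_0(\mathcal{C})^*=\operatorname{Hom}(\overline{K}_0(\mathcal{C}),\mathbb{Z}_2)$.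
   Context: $k$ algebraically closed; $\mathcal{H}=\operatorname{coh}\mathbb{X}$ hereditary abelian with AR translation $\tau$ and Serre duality; finite length objects form exceptional tubes of ranks $p_1,\ldots,p_t$ and homogeneous tubes of rank $1$. $L$ structure sheaf, $a=[L]$; $S_i$ ($1\le i\le t$) the unique simple in the $i$-th exceptional tube with $\operatorname{Hom}(L,S_i)\ne0$, $s_i=[S_i]$; $S_0$ simple in a homogeneous tube, $s_0=[S_0]$. Euler form $\langle[X],[Y]\rangle=\dim\operatorname{Hom}(X,Y)-\dim\operatorname{Ext}^1(X,Y)$; Coxeter transformation $\Phi[X]=[\tau X]$ (so $\Phi^{p_i}s_i=s_i$). $\operatorname{rk}(x)=\langle x,s_0\rangle$, $\deg(x)=\sum_{j=0}^{p-1}\langle\Phi^ja,x-\operatorname{rk}(x)a\rangle$, $p=\operatorname{lcm}(p_i)$; $\operatorname{rk}_2,\deg_2$ their reductions mod $2$ on $K_0(\mathcal{H})\otimes\mathbb{Z}_2$. With $\mathcal{D}=D^b(\mathcal{H})$, $F=\tau^{-1}\Sigma$, the cluster category $\mathcal{C}=\mathcal{D}/F^{\mathbb{Z}}$ has $\operatorname{Hom}_{\mathcal{C}}(X,Y)=\bigoplus_i\operatorname{Hom}_{\mathcal{D}}(X,F^iY)$ and projection $\pi$; $\overline{K}_0(\mathcal{C})$ is the Grothendieck group with respect to induced triangles (images under $\pi$ of exact triangles), equal to $\operatorname{Coker}(1+\Phi)$ on $K_0(\mathcal{H})$; linear forms on $K_0(\mathcal{H})$ (resp. mod 2) killing $\operatorname{Im}(1+\Phi)$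 are identified with linear forms on $\overline{K}_0(\mathcal{C})$. *)

theory Defs
  imports Main "HOL-Library.Z2" "HOL-Library.Function_Algebras"
begin

text \<open>Concrete model of the Grothendieck group K_0(coh X) of a weighted projective
line of weight type ps = [p_1,...,p_t] (tubes indexed 0..t-1 here), with its Euler form
and Coxeter transformation.  K_0 is free abelian with basis
  KA = a = [L],  KP = s_0 = [S_0] (simple in a homogeneous tube),
  KS i j = [S_{i,j}]  for i < t, 1 <= j < p_i,
where S_{i,0} = S_i is the simple of tube i with Hom(L,S_i) nonzero and the simples of
tube i are labelled so that tau S_{i,j} = S_{i,j+1 mod p_i}.  One has
[S_{i,0}] = s_0 - sum_{j=1}^{p_i-1} [S_{i,j}].\<close>

datatype kidx = KA | KP | KS nat nat

definition kbasis :: "nat list \<Rightarrow> kidx set" where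
  "kbasis ps = {KA, KP} \<union> {KS i j | i j. i < length ps \<and> 1 \<le> j \<and> j < ps ! i}"

definition K0 :: "nat list \<Rightarrow> (kidx \<Rightarrow> int) set" where
  "K0 ps = {x. \<forall>b. b \<notin> kbasis ps \<longrightarrow> x b = 0}"

definition kvec :: "kidx \<Rightarrow> kidx \<Rightarrow> int" where
  "kvec b = (\<lambda>c. if c = b then 1 else 0)"

text \<open>Euler form on basis elements (Hom minus Ext^1, computed via Serre duality
Ext^1(X,Y) = D Hom(Y, tau X)).\<close>
fun euler_basis :: "nat list \<Rightarrow> kidx \<Rightarrow> kidx \<Rightarrow> int" where
  "euler_basis ps KA KA = 1"
| "euler_basis ps KA KP = 1"
| "euler_basis ps KP KA = -1"
| "euler_basis ps KP KP = 0"
| "euler_basis ps KA (KS i j) = 0"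
| "euler_basis ps (KS i j) KA = (if j = ps ! i - 1 then -1 else 0)"
| "euler_basis ps KP (KS i j) = 0"
| "euler_basis ps (KS i j) KP = 0"
| "euler_basis ps (KS i j) (KS i' k) =
     (if i = i' then (if j = k then 1 else 0) - (if k = j + 1 then 1 else 0) else 0)"

definition euler :: "nat list \<Rightarrow> (kidx \<Rightarrow> int) \<Rightarrow> (kidx \<Rightarrow> int) \<Rightarrow> int" where
  "euler ps x y = (\<Sum>b\<in>kbasis ps. \<Sum>c\<in>kbasis ps. x b * y c * euler_basis ps b c)"

definition cls_a :: "kidx \<Rightarrow> int" where "cls_a = kvec KA"
definition cls_s0 :: "kidx \<Rightarrow> int" where "cls_s0 = kvec KP"

definition simple_cls :: "nat list \<Rightarrow> nat \<Rightarrow> nat \<Rightarrow> kidx \<Rightarrow> int" where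
  "simple_cls ps i j =
     (if j mod (ps ! i) = 0 then kvec KP - (\<Sum>k\<in>{1..<ps ! i}. kvec (KS i k))
      else kvec (KS i (j mod (ps ! i))))"

definition cls_s :: "nat list \<Rightarrow> nat \<Rightarrow> kidx \<Rightarrow> int" where
  "cls_s ps i = simple_cls ps i 0"

text \<open>Coxeter transformation Phi[X] = [tau X] on basis elements:
tau L = L(omega), [L(omega)] = a - 2 s_0 + sum_{i,j>=1} [S_{i,j}];
tau S_0 = S_0; tau S_{i,j} = S_{i,j+1}.\<close>
fun coxeter_basis :: "nat list \<Rightarrow> kidx \<Rightarrow> kidx \<Rightarrow> int" where
  "coxeter_basis ps KA = kvec KA - 2 * kvec KP
      + (\<Sum>i<length ps. \<Sum>j\<in>{1..<ps ! i}. kvec (KS i j))"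
| "coxeter_basis ps KP = kvec KP"
| "coxeter_basis ps (KS i j) = simple_cls ps i (j + 1)"

definition coxeter :: "nat list \<Rightarrow> (kidx \<Rightarrow> int) \<Rightarrow> kidx \<Rightarrow> int" where
  "coxeter ps x = (\<Sum>b\<in>kbasis ps. (\<lambda>c. x b * coxeter_basis ps b c))"

definition rk :: "nat list \<Rightarrow> (kidx \<Rightarrow> int) \<Rightarrow> int" where
  "rk ps x = euler ps x cls_s0"

definition wlcm :: "nat list \<Rightarrow> nat" where
  "wlcm ps = Lcm (set ps)"

definition deg :: "nat list \<Rightarrow> (kidx \<Rightarrow> int) \<Rightarrow> int" where
  "deg ps x = (\<Sum>j<wlcm ps. euler ps ((coxeter ps ^^ j) cls_a)
                                     (x - (\<lambda>c. rk ps x * cls_a c)))"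

definition rk2 :: "nat list \<Rightarrow> (kidx \<Rightarrow> int) \<Rightarrow> bit" where
  "rk2 ps x = of_int (rk ps x)"

definition deg2 :: "nat list \<Rightarrow> (kidx \<Rightarrow> int) \<Rightarrow> bit" where
  "deg2 ps x = of_int (deg ps x)"

definition linform :: "nat list \<Rightarrow> (kidx \<Rightarrow> int) \<Rightarrow> (kidx \<Rightarrow> int) \<Rightarrow> int" where
  "linform ps phi x = (\<Sum>b\<in>kbasis ps. x b * phi b)"

definition linform2 :: "nat list \<Rightarrow> (kidx \<Rightarrow> bit) \<Rightarrow> (kidx \<Rightarrow> int) \<Rightarrow> bit" where
  "linform2 ps phi x = (\<Sum>b\<in>kbasis ps. of_int (x b) * phi b)"

text \<open>A form on K_0 induces a form on Kbar_0(C) = Coker(1 + Phi) iff it kills Im(1 + Phi).\<close>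
definition kills_image :: "nat list \<Rightarrow> ((kidx \<Rightarrow> int) \<Rightarrow> 'a::zero) \<Rightarrow> bool" where
  "kills_image ps f \<longleftrightarrow> (\<forall>x\<in>K0 ps. f (x + coxeter ps x) = 0)"

definition s_hat :: "nat list \<Rightarrow> nat \<Rightarrow> kidx \<Rightarrow> int" where
  "s_hat ps i = (\<Sum>j<ps ! i. (\<lambda>c. (-1) ^ j * (coxeter ps ^^ j) (cls_s ps i) c))"

definition s_tilde :: "nat list \<Rightarrow> nat \<Rightarrow> kidx \<Rightarrow> int" where
  "s_tilde ps i = (\<Sum>j< ps ! i div 2. (coxeter ps ^^ (2 * j)) (cls_s ps i))"

text \<open>The r forms of part (i), indexed 0..r-1:
form 0 = <hat s_1, ->, form k = <tilde s_{k+1} - tilde s_1, -> for 1 <= k < r.\<close>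
definition forms_i :: "nat list \<Rightarrow> nat \<Rightarrow> (kidx \<Rightarrow> int) \<Rightarrow> int" where
  "forms_i ps k = (if k = 0 then euler ps (s_hat ps 0)
                   else euler ps (s_tilde ps k - s_tilde ps 0))"

end

theory Submission
  imports Defs
begin

lemma sum_apply_fun: "(\<Sum>a\<in>A. f a) x = (\<Sum>a\<in>A. f a x)"
  by (induction A rule: infinite_finite_induct) auto

lemma kbasis_eq: "kbasis ps = {KA,KP} \<union> (\<lambda>(i,j). KS i j) ` (SIGMA i:{..<length ps}. {1..<ps!i})"
  by (auto simp: kbasis_def)

lemma finite_kbasis[simp]: "finite (kbasis ps)"
  by (simp add: kbasis_eq)

lemma kbasis_mem[simp]: "KA \<in> kbasis ps" "KP \<in> kbasis ps"
  "KS i j \<in> kbasis ps \<longleftrightarrow> i < length ps \<and> 1 \<le> j \<and> j < ps!i"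
  by (auto simp: kbasis_def)

lemma sum_kbasis: "(\<Sum>b\<in>kbasis ps. f b) = f KA + f KP + (\<Sum>i<length ps. \<Sum>j\<in>{1..<ps!i}. f (KS i j))"
proof -
  let ?S = "SIGMA i:{..<length ps}. {1..<ps!i}"
  have "(\<Sum>b\<in>kbasis ps. f b) = (\<Sum>b\<in>{KA,KP}. f b) + (\<Sum>b\<in>(\<lambda>(i,j). KS i j) ` ?S. f b)"
    unfolding kbasis_eq by (rule sum.union_disjoint) auto
  also have "(\<Sum>b\<in>(\<lambda>(i,j). KS i j) ` ?S. f b) = (\<Sum>(i,j)\<in>?S. f (KS i j))"
    by (subst sum.reindex) (auto simp: inj_on_def split_def)
  also have "\<dots> = (\<Sum>i<length ps. \<Sum>j\<in>{1..<ps!i}. f (KS i j))"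
    by (simp add: sum.Sigma)
  finally show ?thesis by simp
qed

lemma ball_kbasis: "(\<forall>b\<in>kbasis ps. P b) \<longleftrightarrow> P KA \<and> P KP \<and> (\<forall>i<length ps. \<forall>j. 1 \<le> j \<and> j < ps!i \<longrightarrow> P (KS i j))"
  by (auto simp: kbasis_def)

definition lf :: "nat list \<Rightarrow> (kidx \<Rightarrow> 'a::comm_ring_1) \<Rightarrow> (kidx \<Rightarrow> int) \<Rightarrow> 'a" where
  "lf ps phi x = (\<Sum>b\<in>kbasis ps. of_int (x b) * phi b)"

lemma linform_lf: "linform ps phi = lf ps phi"
  by (simp add: fun_eq_iff linform_def lf_def)

lemma linform2_lf: "linform2 ps phi = lf ps phi"
  by (simp add: fun_eq_iff linform2_def lf_def)

lemma lf_add: "lf ps phi (x + y) = lf ps phi x + lf ps phi y"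
  by (simp add: lf_def distrib_right sum.distrib)

lemma lf_diff: "lf ps phi (x - y) = lf ps phi x - lf ps phi y"
  by (simp add: lf_def left_diff_distrib sum_subtractf)

lemma lf_numeral_mult: "lf ps phi (numeral n * x) = numeral n * lf ps phi x"
  by (simp add: lf_def sum_distrib_left mult.assoc)

lemma lf_sum: "lf ps phi (\<Sum>k\<in>A. v k) = (\<Sum>k\<in>A. lf ps phi (v k))"
  unfolding lf_def sum_apply_fun of_int_sum sum_distrib_right
  by (rule sum.swap)

lemma lf_kvec: "lf ps phi (kvec b) = phi b" if "b \<in> kbasis ps"
proof -
  have "lf ps phi (kvec b) = (\<Sum>c\<in>kbasis ps. if c = b then phi c else 0)"
    unfolding lf_def kvec_def by (intro sum.cong) auto
  then show ?thesis using that by simp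
qed

lemma lf_cong: "(\<And>b. b \<in> kbasis ps \<Longrightarrow> phi b = psi b) \<Longrightarrow> lf ps phi = lf ps psi"
  unfolding lf_def fun_eq_iff by (auto intro!: sum.cong)

lemma lf_phi_sum: "(\<Sum>k\<in>A. c k * lf ps (phi k) x) = lf ps (\<lambda>b. \<Sum>k\<in>A. c k * phi k b) x"
  unfolding lf_def sum_distrib_left sum_distrib_right
  by (subst sum.swap) (simp add: algebra_simps)


lemma sum_KS_delta: "finite A \<Longrightarrow> (\<Sum>k'\<in>A. (if KS i' k = KS i k' then 1 else 0)::int) = (if i' = i \<and> k \<in> A then 1 else 0)"
  by (cases "i' = i") auto

lemma sc_KA[simp]: "simple_cls ps i m KA = 0"
  by (simp add: simple_cls_def sum_apply_fun kvec_def)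

lemma sc_KP[simp]: "simple_cls ps i m KP = (if m mod ps!i = 0 then 1 else 0)"
  by (simp add: simple_cls_def sum_apply_fun kvec_def)

lemma sc_KS: "0 < ps!i \<Longrightarrow> simple_cls ps i m (KS i' k) =
   (if i' = i \<and> 1 \<le> k \<and> k < ps!i then (if m mod ps!i = 0 then -1 else if k = m mod ps!i then 1 else 0) else 0)"
  unfolding simple_cls_def
  by (auto simp: sum_apply_fun kvec_def sum_KS_delta)

lemma sumsumKS: "(\<Sum>i<length ps. \<Sum>j\<in>{1..<ps!i}. kvec (KS i j)) c =
   (case c of KS i k \<Rightarrow> if i < length ps \<and> 1 \<le> k \<and> k < ps!i then 1 else 0 | _ \<Rightarrow> 0)"
proof (cases c)
  case (KS i k)
  have "(\<Sum>i'<length ps. \<Sum>j\<in>{1..<ps!i'}. kvec (KS i' j)) c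
     = (\<Sum>i'<length ps. if i' = i then (if 1 \<le> k \<and> k < ps!i then 1 else 0) else 0)"
    unfolding sum_apply_fun KS kvec_def
    by (intro sum.cong refl) (auto simp: sum_KS_delta)
  then show ?thesis using KS by simp
qed (auto simp: sum_apply_fun kvec_def)

lemma cox_apply: "coxeter ps v c = (\<Sum>b\<in>kbasis ps. v b * coxeter_basis ps b c)"
  by (simp add: coxeter_def sum_apply_fun)

lemma cbA_apply: "coxeter_basis ps KA c = kvec KA c - 2 * kvec KP c +
   (case c of KS i k \<Rightarrow> if i < length ps \<and> 1 \<le> k \<and> k < ps!i then 1 else 0 | _ \<Rightarrow> 0)"
  by (simp add: sumsumKS[symmetric])

lemma cox_KA[simp]: "coxeter ps v KA = v KA"
  unfolding cox_apply sum_kbasis by (simp add: cbA_apply kvec_def del: coxeter_basis.simps(1))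

lemma cox_KP: assumes w: "\<forall>i<length ps. 2 \<le> ps ! i"
  shows "coxeter ps v KP = -2 * v KA + v KP + (\<Sum>i<length ps. v (KS i (ps!i - 1)))"
proof -
  have "(\<Sum>j\<in>{1..<ps!i}. v (KS i j) * simple_cls ps i (Suc j) KP) = v (KS i (ps!i - 1))"
    if "i < length ps" for i
  proof -
    have "(\<Sum>j\<in>{1..<ps!i}. v (KS i j) * simple_cls ps i (Suc j) KP)
        = (\<Sum>j\<in>{1..<ps!i}. if j = ps!i - 1 then v (KS i j) else 0)"
      by (intro sum.cong refl) (auto simp: mod_Suc)
    also have "\<dots> = v (KS i (ps!i - 1))" using w that by auto
    finally show ?thesis .
  qed
  then show ?thesis
    unfolding cox_apply sum_kbasis by (simp add: cbA_apply kvec_def del: coxeter_basis.simps(1))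
qed

lemma cox_KS: assumes w: "\<forall>i<length ps. 2 \<le> ps ! i" and i: "i < length ps" "1 \<le> k" "k < ps!i"
  shows "coxeter ps v (KS i k) = v KA + (if 2 \<le> k then v (KS i (k-1)) else 0) - v (KS i (ps!i - 1))"
proof -
  let ?X = "(if 2 \<le> k then v (KS i (k-1)) else 0) - v (KS i (ps!i - 1))"
  have inner: "(\<Sum>j\<in>{1..<ps!i'}. v (KS i' j) * coxeter_basis ps (KS i' j) (KS i k)) = (if i' = i then ?X else 0)"
    if "i' < length ps" for i'
  proof (cases "i' = i")
    case True
    have p: "0 < ps!i" using w i by fastforce
    have "(\<Sum>j\<in>{1..<ps!i'}. v (KS i' j) * coxeter_basis ps (KS i' j) (KS i k))
       = (\<Sum>j\<in>{1..<ps!i}. (if j = k - 1 then (if 2 \<le> k then v (KS i j) else 0) else 0)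
             - (if j = ps!i - 1 then v (KS i j) else 0))"
      using True p i by (intro sum.cong refl) (auto simp: sc_KS mod_Suc)
    also have "\<dots> = ?X"
    proof -
      have a: "(\<Sum>j\<in>{1..<ps!i}. (if j = k - 1 then (if 2 \<le> k then v (KS i j) else 0) else 0))
          = (if 2 \<le> k then v (KS i (k-1)) else 0)" using i by auto
      have b: "(\<Sum>j\<in>{1..<ps!i}. (if j = ps!i - 1 then v (KS i j) else 0)) = v (KS i (ps!i - 1))"
        using w i by auto
      show ?thesis unfolding sum_subtractf a b ..
    qed
    finally show ?thesis using True by simp
  next
    case False
    have p: "0 < ps!i'" using w that by fastforce
    show ?thesis using False p by (simp add: sc_KS)
  qed
  have inner2: "(\<Sum>i'<length ps. \<Sum>j\<in>{1..<ps!i'}. v (KS i' j) * coxeter_basis ps (KS i' j) (KS i k))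
     = (\<Sum>i'<length ps. if i' = i then ?X else 0)"
    by (rule sum.cong[OF refl], rule inner) simp
  show ?thesis
    unfolding cox_apply sum_kbasis inner2 using i by (simp add: cbA_apply kvec_def del: coxeter_basis.simps(1))
qed

lemma cox_out: assumes w: "\<forall>i<length ps. 2 \<le> ps ! i" and c: "c \<notin> kbasis ps"
  shows "coxeter ps v c = 0"
proof -
  obtain i k where c': "c = KS i k" using c by (cases c) auto
  have "simple_cls ps i' (Suc j) c = 0" if "i' < length ps" for i' j
  proof -
    have "0 < ps!i'" using w that by fastforce
    then show ?thesis using c c' that by (auto simp: sc_KS)
  qed
  then show ?thesis unfolding cox_apply sum_kbasis using c c' by (auto simp: cbA_apply kvec_def simp del: coxeter_basis.simps(1))
qed

lemma lf_smult: "lf ps phi (\<lambda>c. a * u c) = of_int a * lf ps phi u"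
  by (simp add: lf_def sum_distrib_left mult.assoc)

lemma lf_phi_add: "lf ps phi x + lf ps psi x = lf ps (\<lambda>b. phi b + psi b) x"
  by (simp add: lf_def distrib_left sum.distrib)

lemma lf_cox: "lf ps phi (coxeter ps x) = lf ps (\<lambda>b. lf ps phi (coxeter_basis ps b)) x"
  unfolding coxeter_def lf_sum lf_smult by (simp add: lf_def)

lemma kvec_K0: "b \<in> kbasis ps \<Longrightarrow> kvec b \<in> K0 ps"
  by (auto simp: K0_def kvec_def)

lemma lf_zero_iff: "(\<forall>x\<in>K0 ps. lf ps chi x = 0) \<longleftrightarrow> (\<forall>b\<in>kbasis ps. chi b = 0)"
proof
  assume "\<forall>x\<in>K0 ps. lf ps chi x = 0"
  then show "\<forall>b\<in>kbasis ps. chi b = 0" using kvec_K0 lf_kvec by metis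
next
  assume "\<forall>b\<in>kbasis ps. chi b = 0"
  then have "lf ps chi = lf ps (\<lambda>_. 0)" by (intro lf_cong) auto
  then show "\<forall>x\<in>K0 ps. lf ps chi x = 0" by (simp add: lf_def)
qed

definition Ccond :: "nat list \<Rightarrow> (kidx \<Rightarrow> 'a::comm_ring_1) \<Rightarrow> bool" where
  "Ccond ps phi \<longleftrightarrow> (\<forall>b\<in>kbasis ps. phi b + lf ps phi (coxeter_basis ps b) = 0)"

lemma kills_lf: "kills_image ps (lf ps phi) \<longleftrightarrow> Ccond ps phi"
  unfolding kills_image_def Ccond_def lf_add lf_cox lf_phi_add lf_zero_iff ..

lemma lf_cbA: "lf ps phi (coxeter_basis ps KA) = phi KA - 2 * phi KP + (\<Sum>i<length ps. \<Sum>j\<in>{1..<ps!i}. phi (KS i j))"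
  by (simp add: lf_add lf_diff lf_numeral_mult lf_sum lf_kvec)

lemma lf_cbP: "lf ps phi (coxeter_basis ps KP) = phi KP"
  by (simp add: lf_kvec)

lemma lf_sc: assumes "0 < ps!i" "i < length ps"
  shows "lf ps phi (simple_cls ps i m) = (if m mod ps!i = 0 then phi KP - (\<Sum>k\<in>{1..<ps!i}. phi (KS i k)) else phi (KS i (m mod ps!i)))"
  using assms by (simp add: simple_cls_def lf_diff lf_sum lf_kvec)


lemma sum_delta_conj: "finite A \<Longrightarrow> (\<Sum>x\<in>A. if x = a \<and> P x then f x else 0) = (if a \<in> A \<and> P a then f a else 0)"
proof -
  assume "finite A"
  have "(\<Sum>x\<in>A. if x = a \<and> P x then f x else 0) = (\<Sum>x\<in>A. if x = a then (if P a then f a else 0) else 0)"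
    by (intro sum.cong) auto
  then show ?thesis using \<open>finite A\<close> by simp
qed

lemma cox_sc: assumes w: "\<forall>i<length ps. 2 \<le> ps ! i" and i: "i < length ps"
  shows "coxeter ps (simple_cls ps i m) = simple_cls ps i (Suc m)"
proof
  fix c
  have p: "2 \<le> ps!i" using w i by auto
  then have p0: "0 < ps!i" by auto
  show "coxeter ps (simple_cls ps i m) c = simple_cls ps i (Suc m) c"
  proof (cases "c \<in> kbasis ps")
    case False
    then obtain i' k where c: "c = KS i' k" by (cases c) auto
    then show ?thesis using False cox_out[OF w False] p0 i by (auto simp: sc_KS)
  next
    case True
    show ?thesis
    proof (cases c)
      case KA then show ?thesis by simp
    next
      case KP
      have "(\<Sum>i'<length ps. simple_cls ps i m (KS i' (ps!i' - 1)))
          = (\<Sum>i'<length ps. if i' = i \<and> True then (if m mod ps!i = 0 then -1 else if ps!i - 1 = m mod ps!i then 1 else 0) else 0)"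
        using p by (intro sum.cong) (auto simp: sc_KS)
      also have "\<dots> = (if m mod ps!i = 0 then -1 else if ps!i - 1 = m mod ps!i then 1 else 0)"
        using i by (subst sum_delta_conj) auto
      finally have "(\<Sum>i'<length ps. simple_cls ps i m (KS i' (ps!i' - 1))) = (if m mod ps!i = 0 then -1 else if ps!i - 1 = m mod ps!i then 1 else 0)" .
      then show ?thesis using KP p cox_KP[OF w] by (auto simp: mod_Suc)
    next
      case (KS i' k)
      then have k: "i' < length ps" "1 \<le> k" "k < ps!i'" using True by auto
      have mlt: "m mod ps!i < ps!i" using p0 by auto
      show ?thesis unfolding KS cox_KS[OF w k]
        using k p p0 mlt by (auto simp: sc_KS mod_Suc)
    qed
  qed
qed

lemma cox_pow_s: assumes w: "\<forall>i<length ps. 2 \<le> ps ! i" and i: "i < length ps"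
  shows "(coxeter ps ^^ j) (cls_s ps i) = simple_cls ps i j"
  by (induction j) (auto simp: cls_s_def cox_sc[OF w i])

definition ecoef :: "nat list \<Rightarrow> (kidx \<Rightarrow> int) \<Rightarrow> kidx \<Rightarrow> int" where
  "ecoef ps v c = (\<Sum>b\<in>kbasis ps. v b * euler_basis ps b c)"

lemma euler_lf: "euler ps v = lf ps (ecoef ps v)"
proof
  fix x
  show "euler ps v x = lf ps (ecoef ps v) x"
    unfolding euler_def lf_def ecoef_def sum_distrib_left
    by (subst sum.swap) (simp add: algebra_simps)
qed

lemma ec_diff: "ecoef ps (u - w) c = ecoef ps u c - ecoef ps w c"
  by (simp add: ecoef_def left_diff_distrib sum_subtractf)

lemma ec_sum: "ecoef ps (\<Sum>k\<in>A. u k) c = (\<Sum>k\<in>A. ecoef ps (u k) c)"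
  unfolding ecoef_def sum_apply_fun sum_distrib_right by (rule sum.swap)

lemma ec_smult: "ecoef ps (\<lambda>c. a * u c) c = a * ecoef ps u c"
  by (simp add: ecoef_def sum_distrib_left mult.assoc)

lemma ec_KA: assumes w: "\<forall>i<length ps. 2 \<le> ps ! i"
  shows "ecoef ps v KA = v KA - v KP - (\<Sum>i<length ps. v (KS i (ps!i - 1)))"
proof -
  have "(\<Sum>j\<in>{1..<ps!i}. v (KS i j) * euler_basis ps (KS i j) KA) = - v (KS i (ps!i - 1))"
    if "i < length ps" for i
  proof -
    have "(\<Sum>j\<in>{1..<ps!i}. v (KS i j) * euler_basis ps (KS i j) KA)
       = (\<Sum>j\<in>{1..<ps!i}. if j = ps!i - 1 then - v (KS i j) else 0)"
      by (intro sum.cong) auto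
    also have "\<dots> = - v (KS i (ps!i - 1))" using w that by auto
    finally show ?thesis .
  qed
  then show ?thesis unfolding ecoef_def sum_kbasis by (simp add: sum_negf)
qed

lemma ec_KP: "ecoef ps v KP = v KA"
  unfolding ecoef_def sum_kbasis by simp

lemma ec_KS: assumes k: "i < length ps" "1 \<le> k" "k < ps!i"
  shows "ecoef ps v (KS i k) = v (KS i k) - (if 2 \<le> k then v (KS i (k-1)) else 0)"
proof -
  let ?X = "v (KS i k) - (if 2 \<le> k then v (KS i (k-1)) else 0)"
  have inner: "(\<Sum>j\<in>{1..<ps!i'}. v (KS i' j) * euler_basis ps (KS i' j) (KS i k)) = (if i' = i then ?X else 0)"
    for i'
  proof (cases "i' = i")
    case True
    have "(\<Sum>j\<in>{1..<ps!i'}. v (KS i' j) * euler_basis ps (KS i' j) (KS i k))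
       = (\<Sum>j\<in>{1..<ps!i}. (if j = k then v (KS i j) else 0) - (if j = k - 1 then (if 2 \<le> k then v (KS i j) else 0) else 0))"
      using True k by (intro sum.cong refl) auto
    also have "\<dots> = ?X" using k by (auto simp: sum_subtractf)
    finally show ?thesis using True by simp
  qed simp
  show ?thesis unfolding ecoef_def sum_kbasis inner using k by simp
qed


lemma sc_sum_last: assumes w: "\<forall>i<length ps. 2 \<le> ps ! i" and i: "i < length ps"
  shows "(\<Sum>i'<length ps. simple_cls ps i m (KS i' (ps!i' - 1)))
     = (if m mod ps!i = 0 then -1 else if ps!i - 1 = m mod ps!i then 1 else 0)"
proof -
  have p: "2 \<le> ps!i" using w i by auto
  have "(\<Sum>i'<length ps. simple_cls ps i m (KS i' (ps!i' - 1)))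
      = (\<Sum>i'<length ps. if i' = i \<and> True then (if m mod ps!i = 0 then -1 else if ps!i - 1 = m mod ps!i then 1 else 0) else 0)"
    using p by (intro sum.cong) (auto simp: sc_KS)
  also have "\<dots> = (if m mod ps!i = 0 then -1 else if ps!i - 1 = m mod ps!i then 1 else 0)"
    using i by (subst sum_delta_conj) auto
  finally show ?thesis .
qed

lemma ec_sc_KA: assumes w: "\<forall>i<length ps. 2 \<le> ps ! i" and i: "i < length ps"
  shows "ecoef ps (simple_cls ps i m) KA = (if m mod ps!i = ps!i - 1 then -1 else 0)"
proof -
  have p: "2 \<le> ps!i" using w i by auto
  show ?thesis unfolding ec_KA[OF w] sc_sum_last[OF w i] using p by auto
qed

lemma ec_sc_KP: "ecoef ps (simple_cls ps i m) KP = 0"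
  by (simp add: ec_KP)

lemma ec_sc_KS: assumes w: "\<forall>i<length ps. 2 \<le> ps ! i" and i: "i < length ps"
  and k: "i' < length ps" "1 \<le> k" "k < ps!i'"
  shows "ecoef ps (simple_cls ps i m) (KS i' k) =
    (if i' = i then (if k = m mod ps!i then 1 else 0) - (if k = Suc m mod ps!i then 1 else 0) else 0)"
proof -
  have p: "2 \<le> ps!i" using w i by auto
  have mlt: "m mod ps!i < ps!i" using p by auto
  show ?thesis unfolding ec_KS[OF k] using p k mlt by (auto simp: sc_KS mod_Suc)
qed

lemma ec_shat: assumes w: "\<forall>i<length ps. 2 \<le> ps ! i" and i: "i < length ps"
  shows "ecoef ps (s_hat ps i) c = (\<Sum>j<ps!i. (-1)^j * ecoef ps (simple_cls ps i j) c)"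
  unfolding s_hat_def ec_sum ec_smult cox_pow_s[OF w i] ..

lemma ec_stil: assumes w: "\<forall>i<length ps. 2 \<le> ps ! i" and i: "i < length ps"
  shows "ecoef ps (s_tilde ps i) c = (\<Sum>j<ps!i div 2. ecoef ps (simple_cls ps i (2*j)) c)"
  unfolding s_tilde_def ec_sum cox_pow_s[OF w i] ..

lemma shat_KA: assumes w: "\<forall>i<length ps. 2 \<le> ps ! i" and i: "i < length ps" and e: "even (ps!i)"
  shows "ecoef ps (s_hat ps i) KA = 1"
proof -
  have p: "2 \<le> ps!i" using w i by auto
  have "(\<Sum>j<ps!i. (-1)^j * ecoef ps (simple_cls ps i j) KA)
     = (\<Sum>j<ps!i. if j = ps!i - 1 then - ((-1)^(ps!i - 1)) else (0::int))"
    by (intro sum.cong) (auto simp: ec_sc_KA[OF w i])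
  also have "\<dots> = - ((-1)^(ps!i - 1))" using p by auto
  also have "\<dots> = 1" using e p by (simp add: neg_one_odd_power)
  finally show ?thesis unfolding ec_shat[OF w i] .
qed

lemma shat_KP: assumes w: "\<forall>i<length ps. 2 \<le> ps ! i" and i: "i < length ps"
  shows "ecoef ps (s_hat ps i) KP = 0"
  unfolding ec_shat[OF w i] ec_sc_KP by simp

lemma shat_KS: assumes w: "\<forall>i<length ps. 2 \<le> ps ! i" and i: "i < length ps"
  and k: "i' < length ps" "1 \<le> k" "k < ps!i'"
  shows "ecoef ps (s_hat ps i) (KS i' k) = (if i' = i then 2 * (-1)^k else 0)"
proof (cases "i' = i")
  case True
  have p: "2 \<le> ps!i" using w i by auto
  have "(\<Sum>j<ps!i. (-1)^j * ecoef ps (simple_cls ps i j) (KS i' k))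
     = (\<Sum>j<ps!i. (if j = k then (-1)^k else 0) - (if j = k - 1 then (-1)^(k-1) else (0::int)))"
  proof (intro sum.cong refl)
    fix j assume j: "j \<in> {..<ps!i}"
    have e1: "(k = Suc j mod ps!i) \<longleftrightarrow> j = k - 1"
      using j k True by (auto simp: mod_Suc)
    have jm: "j mod ps!i = j" using j by simp
    show "(-1)^j * ecoef ps (simple_cls ps i j) (KS i' k) = (if j = k then (-1)^k else 0) - (if j = k - 1 then (-1)^(k-1) else (0::int))"
      unfolding ec_sc_KS[OF w i k] jm e1 using j k True by auto
  qed
  also have "\<dots> = (-1)^k - (-1)^(k-1)" using k True by (auto simp: sum_subtractf)
  also have "\<dots> = 2 * (-1)^k" using k by (cases k) auto
  finally show ?thesis unfolding ec_shat[OF w i] using True by simp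
next
  case False
  then show ?thesis unfolding ec_shat[OF w i] by (simp add: ec_sc_KS[OF w i k])
qed

lemma stil_KA: assumes w: "\<forall>i<length ps. 2 \<le> ps ! i" and i: "i < length ps" and e: "even (ps!i)"
  shows "ecoef ps (s_tilde ps i) KA = 0"
proof -
  have "ecoef ps (simple_cls ps i (2*j)) KA = 0" if "j < ps!i div 2" for j
  proof -
    have "2*j < ps!i" using that e by auto
    then have "2*j mod ps!i = 2*j" by simp
    moreover have "2*j \<noteq> ps!i - 1"
    proof
      assume "2*j = ps!i - 1"
      then have "ps!i = 2*j+1" using w i by (metis One_nat_def Suc_leD \<open>2 * j < ps ! i\<close> add.commute plus_1_eq_Suc Suc_diff_1 zero_less_iff_neq_zero not_less0)
      with e show False by simp
    qed
    ultimately show ?thesis by (simp add: ec_sc_KA[OF w i])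
  qed
  then show ?thesis unfolding ec_stil[OF w i] by simp
qed

lemma stil_KP: assumes w: "\<forall>i<length ps. 2 \<le> ps ! i" and i: "i < length ps"
  shows "ecoef ps (s_tilde ps i) KP = 0"
  unfolding ec_stil[OF w i] ec_sc_KP by simp

lemma stil_KS: assumes w: "\<forall>i<length ps. 2 \<le> ps ! i" and i: "i < length ps" and e: "even (ps!i)"
  and k: "i' < length ps" "1 \<le> k" "k < ps!i'"
  shows "ecoef ps (s_tilde ps i) (KS i' k) = (if i' = i then (-1)^k else 0)"
proof (cases "i' = i")
  case True
  have "(\<Sum>j<ps!i div 2. ecoef ps (simple_cls ps i (2*j)) (KS i' k))
     = (\<Sum>j<ps!i div 2. (if j = k div 2 then (if even k then 1 else 0) else 0)
                       - (if j = k div 2 then (if odd k then 1 else 0) else (0::int)))"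
  proof (intro sum.cong refl)
    fix j assume j: "j \<in> {..<ps!i div 2}"
    then have j2: "Suc (2*j) < ps!i" using e by auto
    then have m1: "2*j mod ps!i = 2*j" "Suc (2*j) mod ps!i = Suc (2*j)" by auto
    show "ecoef ps (simple_cls ps i (2*j)) (KS i' k) = (if j = k div 2 then (if even k then 1 else 0) else 0)
                       - (if j = k div 2 then (if odd k then 1 else 0) else (0::int))"
      unfolding ec_sc_KS[OF w i k] m1 using True by auto
  qed
  also have "\<dots> = (-1)^k"
  proof -
    have "k div 2 < ps!i div 2" using k True e by auto
    then show ?thesis by (simp add: sum_subtractf)
  qed
  finally show ?thesis unfolding ec_stil[OF w i] using True by simp
next
  case False
  then show ?thesis unfolding ec_stil[OF w i] by (simp add: ec_sc_KS[OF w i k])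
qed


definition Gf :: "nat list \<Rightarrow> nat \<Rightarrow> kidx \<Rightarrow> int" where
  "Gf ps k = (if k = 0 then ecoef ps (s_hat ps 0) else ecoef ps (s_tilde ps k - s_tilde ps 0))"

lemma forms_lf: "forms_i ps k = lf ps (Gf ps k)"
  by (simp add: forms_i_def Gf_def euler_lf)

locale setup_i =
  fixes ps :: "nat list" and r :: nat
  assumes w: "\<forall>i<length ps. 2 \<le> ps ! i"
    and r_le: "r \<le> length ps"
    and evens: "\<forall>i<r. even (ps ! i)"
    and odds: "\<forall>i. r \<le> i \<and> i < length ps \<longrightarrow> odd (ps ! i)"
    and r1: "1 \<le> r"
begin

lemma t0: "0 < length ps" using r_le r1 by auto

lemma G_KA: "k < r \<Longrightarrow> Gf ps k KA = (if k = 0 then 1 else 0)"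
  using evens r_le t0
  by (auto simp: Gf_def ec_diff shat_KA[OF w] stil_KA[OF w])

lemma G_KP: "k < r \<Longrightarrow> Gf ps k KP = 0"
  using evens r_le t0
  by (auto simp: Gf_def ec_diff shat_KP[OF w] stil_KP[OF w])

lemma G_KS: "k < r \<Longrightarrow> i < length ps \<Longrightarrow> 1 \<le> j \<Longrightarrow> j < ps!i \<Longrightarrow>
  Gf ps k (KS i j) = (if k = 0 then (if i = 0 then 2*(-1)^j else 0)
       else (if i = k then (-1)^j else 0) - (if i = 0 then (-1)^j else 0))"
  using evens r_le t0
  by (auto simp: Gf_def ec_diff shat_KS[OF w] stil_KS[OF w])

end

lemma altsum: "1 \<le> p \<Longrightarrow> (\<Sum>j\<in>{1..<p}. (-1)^j :: int) = (if even p then -1 else 0)"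
proof (induction p rule: dec_induct)
  case base then show ?case by simp
next
  case (step n)
  then show ?case by (simp add: sum.atLeastLessThan_Suc)
qed

lemma alt_Ccond:
  fixes phi :: "kidx \<Rightarrow> int"
  assumes w: "\<forall>i<length ps. 2 \<le> ps ! i"
    and P: "phi KP = 0"
    and S: "\<forall>i<length ps. \<forall>j. 1 \<le> j \<and> j < ps!i \<longrightarrow> phi (KS i j) = (-1)^j * z i"
    and O: "\<forall>i<length ps. odd (ps!i) \<longrightarrow> z i = 0"
    and A: "2 * phi KA = (\<Sum>i<length ps. z i)"
  shows "Ccond ps phi"
proof -
  have rowsum: "(\<Sum>j\<in>{1..<ps!i}. phi (KS i j)) = - z i" if i: "i < length ps" for i
  proof -
    have "(\<Sum>j\<in>{1..<ps!i}. phi (KS i j)) = (\<Sum>j\<in>{1..<ps!i}. (-1)^j * z i)"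
      using S i by (intro sum.cong) auto
    also have "\<dots> = (\<Sum>j\<in>{1..<ps!i}. (-1)^j) * z i"
      by (simp add: sum_distrib_right)
    also have "\<dots> = z i * (if even (ps!i) then -1 else 0)"
    proof -
      have p1: "1 \<le> ps!i" using w i by fastforce
      show ?thesis unfolding altsum[OF p1] by simp
    qed
    also have "\<dots> = - z i" using O i by auto
    finally show ?thesis .
  qed
  have KAc: "phi KA + lf ps phi (coxeter_basis ps KA) = 0"
  proof -
    have "(\<Sum>i<length ps. \<Sum>j\<in>{1..<ps!i}. phi (KS i j)) = (\<Sum>i<length ps. - z i)"
      using rowsum by (intro sum.cong) auto
    then show ?thesis unfolding lf_cbA using P A by (simp add: sum_negf)
  qed
  have KSc: "phi (KS i j) + lf ps phi (coxeter_basis ps (KS i j)) = 0"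
    if i: "i < length ps" "1 \<le> j" "j < ps!i" for i j
  proof -
    have p: "0 < ps!i" using i by auto
    show ?thesis
    proof (cases "Suc j = ps!i")
      case True
      then have "(j + 1) mod ps!i = 0" by simp
      then have "lf ps phi (coxeter_basis ps (KS i j)) = z i"
        using rowsum[OF i(1)] P by (simp add: lf_sc[OF p i(1)])
      moreover have "phi (KS i j) = - z i"
      proof (cases "even (ps!i)")
        case True
        then have "odd j" using \<open>Suc j = ps!i\<close> by (metis even_Suc)
        then show ?thesis using S i by simp
      next
        case False
        then show ?thesis using O S i by simp
      qed
      ultimately show ?thesis by simp
    next
      case False
      then have "(j + 1) mod ps!i = Suc j" "Suc j < ps!i" using i by auto
      then have "lf ps phi (coxeter_basis ps (KS i j)) = phi (KS i (Suc j))"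
        by (simp add: lf_sc[OF p i(1)])
      then show ?thesis using S i \<open>Suc j < ps!i\<close> by simp
    qed
  qed
  show ?thesis unfolding Ccond_def ball_kbasis
    using KAc KSc P by (simp add: lf_kvec)
qed

lemma Ccond_int_facts:
  fixes phi :: "kidx \<Rightarrow> int"
  assumes w: "\<forall>i<length ps. 2 \<le> ps ! i" and C: "Ccond ps phi"
  defines "z \<equiv> \<lambda>i. - phi (KS i 1)"
  shows "phi KP = 0"
    and "\<forall>i<length ps. \<forall>j. 1 \<le> j \<and> j < ps!i \<longrightarrow> phi (KS i j) = (-1)^j * z i"
    and "\<forall>i<length ps. odd (ps!i) \<longrightarrow> z i = 0"
    and "2 * phi KA = (\<Sum>i<length ps. z i)"
proof -
  have C': "\<forall>b\<in>kbasis ps. phi b + lf ps phi (coxeter_basis ps b) = 0"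
    using C by (simp add: Ccond_def)
  have "phi KP + lf ps phi (coxeter_basis ps KP) = 0" using bspec[OF C' kbasis_mem(2)] .
  then have "phi KP + phi KP = 0" by (simp add: lf_kvec)
  then show P: "phi KP = 0" by simp
  have Sx: "phi (KS i j) + (if Suc j mod ps!i = 0 then - (\<Sum>k\<in>{1..<ps!i}. phi (KS i k)) else phi (KS i (Suc j mod ps!i))) = 0"
    if i: "i < length ps" "1 \<le> j" "j < ps!i" for i j
  proof -
    have p: "0 < ps!i" using i by auto
    have "phi (KS i j) + lf ps phi (coxeter_basis ps (KS i j)) = 0" using bspec[OF C', of "KS i j"] i by simp
    then show ?thesis using P by (auto simp: lf_sc[OF p i(1)])
  qed
  show S: "\<forall>i<length ps. \<forall>j. 1 \<le> j \<and> j < ps!i \<longrightarrow> phi (KS i j) = (-1)^j * z i"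
  proof (intro allI impI)
    fix i j assume i: "i < length ps" and j: "1 \<le> j \<and> j < ps!i"
    show "phi (KS i j) = (-1)^j * z i" using j
    proof (induction j rule: nat_induct)
      case 0 then show ?case by simp
    next
      case (Suc n)
      show ?case
      proof (cases "n = 0")
        case True then show ?thesis by (simp add: z_def)
      next
        case False
        then have n: "1 \<le> n" "n < ps!i" "Suc n < ps!i" using Suc.prems by auto
        then have "phi (KS i n) + phi (KS i (Suc n)) = 0" using Sx[OF i n(1) n(2)] by simp
        then show ?thesis using Suc.IH n by simp
      qed
    qed
  qed
  have rowsum: "(\<Sum>j\<in>{1..<ps!i}. phi (KS i j)) = z i * (if even (ps!i) then -1 else 0)"
    if i: "i < length ps" for i
  proof -
    have "(\<Sum>j\<in>{1..<ps!i}. phi (KS i j)) = (\<Sum>j\<in>{1..<ps!i}. (-1)^j * z i)"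
      using S i by (intro sum.cong) auto
    also have "\<dots> = (\<Sum>j\<in>{1..<ps!i}. (-1)^j) * z i"
      by (simp add: sum_distrib_right)
    also have "\<dots> = z i * (if even (ps!i) then -1 else 0)"
    proof -
      have p1: "1 \<le> ps!i" using w i by fastforce
      show ?thesis unfolding altsum[OF p1] by simp
    qed
    finally show ?thesis .
  qed
  show O: "\<forall>i<length ps. odd (ps!i) \<longrightarrow> z i = 0"
  proof (intro allI impI)
    fix i assume i: "i < length ps" and o: "odd (ps!i)"
    have p: "2 \<le> ps!i" using w i by auto
    have j: "1 \<le> ps!i - 1" "ps!i - 1 < ps!i" using p by auto
    have "Suc (ps!i - 1) mod ps!i = 0" using p by simp
    then have "phi (KS i (ps!i - 1)) = 0" using Sx[OF i j] rowsum[OF i] o by simp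
    moreover have "even (ps!i - 1)" using o p by simp
    ultimately show "z i = 0" using S i j by simp
  qed
  have "phi KA + lf ps phi (coxeter_basis ps KA) = 0" using bspec[OF C' kbasis_mem(1)] .
  moreover have "(\<Sum>i<length ps. \<Sum>j\<in>{1..<ps!i}. phi (KS i j)) = (\<Sum>i<length ps. - z i)"
    using rowsum O by (intro sum.cong) auto
  ultimately show "2 * phi KA = (\<Sum>i<length ps. z i)"
    unfolding lf_cbA using P by (simp add: sum_negf)
qed


context setup_i begin

lemma part_i_kills: assumes k: "k < r" shows "kills_image ps (forms_i ps k)"
proof -
  define z where "z = (\<lambda>i. if k = 0 then (if i = 0 then 2 else 0)
       else (if i = k then 1 else 0) - (if i = 0 then 1 else 0) :: int)"
  have S: "\<forall>i<length ps. \<forall>j. 1 \<le> j \<and> j < ps!i \<longrightarrow> Gf ps k (KS i j) = (-1)^j * z i"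
    using k by (auto simp: G_KS z_def)
  have O: "\<forall>i<length ps. odd (ps!i) \<longrightarrow> z i = 0"
  proof (intro allI impI)
    fix i assume "i < length ps" "odd (ps!i)"
    then have "r \<le> i" using evens by (meson not_le)
    then show "z i = 0" using k r1 by (auto simp: z_def)
  qed
  have A: "2 * Gf ps k KA = (\<Sum>i<length ps. z i)"
  proof (cases "k = 0")
    case True
    then show ?thesis using t0 k by (simp add: G_KA z_def)
  next
    case False
    have kt: "k < length ps" using k r_le by auto
    have "(\<Sum>i<length ps. z i) = 0" unfolding z_def using False kt t0 by (simp add: sum_subtractf)
    then show ?thesis using False k by (simp add: G_KA)
  qed
  show ?thesis unfolding forms_lf kills_lf
    by (rule alt_Ccond[OF w G_KP[OF k] S O A])
qed

lemma part_i_unique: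
  assumes K: "kills_image ps (linform ps phi)"
  shows "\<exists>!c::nat \<Rightarrow> int. (\<forall>k. r \<le> k \<longrightarrow> c k = 0) \<and>
                  (\<forall>x\<in>K0 ps. linform ps phi x = (\<Sum>k<r. c k * forms_i ps k x))"
proof -
  have C: "Ccond ps phi" using K by (simp add: linform_lf kills_lf)
  define z where "z = (\<lambda>i. - phi (KS i 1))"
  have F1: "phi KP = 0" by (rule Ccond_int_facts(1)[OF w C])
  have F2: "\<forall>i<length ps. \<forall>j. 1 \<le> j \<and> j < ps!i \<longrightarrow> phi (KS i j) = (-1)^j * z i"
    unfolding z_def by (rule Ccond_int_facts(2)[OF w C])
  have F3: "\<forall>i<length ps. odd (ps!i) \<longrightarrow> z i = 0"
    unfolding z_def by (rule Ccond_int_facts(3)[OF w C])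
  have F4: "2 * phi KA = (\<Sum>i<length ps. z i)"
    unfolding z_def by (rule Ccond_int_facts(4)[OF w C])
  note F = F1 F2 F3 F4
  have zsum: "(\<Sum>i<length ps. z i) = (\<Sum>i<r. z i)"
  proof (rule sum.mono_neutral_right)
    show "\<forall>i\<in>{..<length ps} - {..<r}. z i = 0"
    proof
      fix i assume i: "i \<in> {..<length ps} - {..<r}"
      then have "odd (ps!i)" "i < length ps" using odds by auto
      then show "z i = 0" using F(3) by blast
    qed
  qed (use r_le in auto)
  define c0 where "c0 = (\<lambda>k. if k = 0 then phi KA else if k < r then z k else 0)"
  have rep: "phi b = (\<Sum>k<r. c0 k * Gf ps k b)" if b: "b \<in> kbasis ps" for b
  proof (cases b)
    case KA
    have "(\<Sum>k<r. c0 k * Gf ps k KA) = (\<Sum>k<r. if k = 0 then phi KA else 0)"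
      by (intro sum.cong) (auto simp: G_KA c0_def)
    then show ?thesis using KA r1 by simp
  next
    case KP then show ?thesis using F(1) by (simp add: G_KP)
  next
    case (KS i j)
    then have ij: "i < length ps" "1 \<le> j" "j < ps!i" using b by auto
    consider "i = 0" | "0 < i" "i < r" | "r \<le> i" by linarith
    then show ?thesis
    proof cases
      case 1
      have "(\<Sum>k<r. c0 k * Gf ps k b) = (\<Sum>k<r. (if k = 0 then 2*(-1)^j * phi KA + (-1)^j * z 0 else 0) - (-1)^j * z k)"
        using KS 1 ij by (intro sum.cong) (auto simp: G_KS c0_def)
      also have "\<dots> = 2*(-1)^j * phi KA + (-1)^j * z 0 - (-1)^j * (\<Sum>k<r. z k)"
        using r1 by (simp add: sum_subtractf sum_distrib_left)
      also have "\<dots> = (-1)^j * z 0" using F(4) zsum by simp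
      finally show ?thesis using F(2) ij KS 1 by simp
    next
      case 2
      have "(\<Sum>k<r. c0 k * Gf ps k b) = (\<Sum>k<r. if k = i then (-1)^j * z i else 0)"
        using KS 2 ij by (intro sum.cong) (auto simp: G_KS c0_def)
      also have "\<dots> = (-1)^j * z i" using 2 by simp
      finally show ?thesis using F(2) ij KS by simp
    next
      case 3
      have "(\<Sum>k<r. c0 k * Gf ps k b) = (\<Sum>k<r. 0)"
        using KS 3 ij r1 by (intro sum.cong) (auto simp: G_KS c0_def)
      moreover have "z i = 0" using F(3) odds 3 ij by auto
      ultimately show ?thesis using F(2) ij KS by simp
    qed
  qed
  show ?thesis
  proof (rule ex1I[where a = c0], rule conjI)
    show "\<forall>k. r \<le> k \<longrightarrow> c0 k = 0" using r1 by (auto simp: c0_def)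
    show "\<forall>x\<in>K0 ps. linform ps phi x = (\<Sum>k<r. c0 k * forms_i ps k x)"
    proof
      fix x
      have "lf ps phi = lf ps (\<lambda>b. \<Sum>k<r. c0 k * Gf ps k b)" by (rule lf_cong) (rule rep)
      then show "linform ps phi x = (\<Sum>k<r. c0 k * forms_i ps k x)"
        unfolding linform_lf forms_lf lf_phi_sum by simp
    qed
  next
    fix c assume c: "(\<forall>k. r \<le> k \<longrightarrow> c k = 0) \<and> (\<forall>x\<in>K0 ps. linform ps phi x = (\<Sum>k<r. c k * forms_i ps k x))"
    have ev: "phi b = (\<Sum>k<r. c k * Gf ps k b)" if b: "b \<in> kbasis ps" for b
    proof -
      have "linform ps phi (kvec b) = (\<Sum>k<r. c k * forms_i ps k (kvec b))"
        using c kvec_K0[OF b] by blast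
      then show ?thesis unfolding linform_lf forms_lf lf_kvec[OF b] .
    qed
    show "c = c0"
    proof
      fix k
      consider "r \<le> k" | "k = 0" | "0 < k" "k < r" by linarith
      then show "c k = c0 k"
      proof cases
        case 1 then show ?thesis using c r1 by (simp add: c0_def)
      next
        case 2
        have "(\<Sum>m<r. c m * Gf ps m KA) = (\<Sum>m<r. if m = 0 then c 0 else 0)"
          by (intro sum.cong) (auto simp: G_KA)
        then show ?thesis using ev[of KA] 2 r1 by (simp add: c0_def)
      next
        case 3
        have kt: "k < length ps" using 3 r_le by auto
        have p: "1 < ps!k" using w kt by fastforce
        have b: "KS k 1 \<in> kbasis ps" using kt p by simp
        have "(\<Sum>m<r. c m * Gf ps m (KS k 1)) = (\<Sum>m<r. if m = k then - c k else 0)"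
          using 3 kt p by (intro sum.cong) (auto simp: G_KS)
        then show ?thesis using ev[OF b] 3 by (simp add: c0_def z_def)
      qed
    qed
  qed
qed

end


lemma bit_cases: "x = 0 \<or> x = (1::bit)"
  using bit_not_zero_iff by blast

lemma of_int_bit: "(of_int k :: bit) = (if even k then 0 else 1)"
proof -
  have "k = k mod 2 + 2 * (k div 2)" by simp
  then have "(of_int k :: bit) = of_int (k mod 2) + 2 * of_int (k div 2)"
    by (metis of_int_add of_int_mult of_int_numeral)
  also have "\<dots> = of_int (k mod 2)" by simp
  also have "\<dots> = (if even k then 0 else 1)"
    by (cases "even k") (simp_all add: odd_iff_mod_2_eq_one even_iff_mod_2_eq_zero)
  finally show ?thesis .
qed

lemma of_nat_bit: "(of_nat n :: bit) = (if even n then 0 else 1)"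
  using of_int_bit[of "int n"] by simp

lemma bit_add_self[simp]: "x + x = (0::bit)"
  using bit_cases[of x] by auto

lemma bit_add_eq0: "x + y = (0::bit) \<Longrightarrow> x = y"
  using bit_cases[of x] bit_cases[of y] by auto

lemma rk_eq: "rk ps x = x KA"
proof -
  have "rk ps x = lf ps (ecoef ps x) (kvec KP)"
    by (simp add: rk_def euler_lf cls_s0_def)
  also have "\<dots> = x KA" by (simp add: lf_kvec ec_KP)
  finally show ?thesis .
qed

definition RC :: "kidx \<Rightarrow> bit" where "RC b = (if b = KA then 1 else 0)"
definition DC :: "kidx \<Rightarrow> bit" where "DC b = (if b = KA then 0 else 1)"

lemma lf_delta_KA: "lf ps (\<lambda>b. if b = KA then a else 0) x = of_int (x KA) * a"
  by (simp add: lf_def sum_kbasis)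

lemma rk2_lf: "rk2 ps = lf ps RC"
proof
  fix x
  show "rk2 ps x = lf ps RC x"
    using lf_delta_KA[of ps "1::bit" x] by (simp add: rk2_def rk_eq RC_def[abs_def])
qed

lemma lf_comb: "a * lf ps phi x + b * lf ps psi x = lf ps (\<lambda>c. a * phi c + b * psi c) x"
  by (simp add: lf_def sum_distrib_left distrib_left sum.distrib algebra_simps)

lemma lf_of_int: "(of_int (lf ps phi x) :: 'a::comm_ring_1) = lf ps (\<lambda>b. of_int (phi b)) x"
  by (simp add: lf_def)

definition Dv :: "nat list \<Rightarrow> kidx \<Rightarrow> int" where
  "Dv ps b = (\<Sum>j<wlcm ps. ecoef ps ((coxeter ps ^^ j) cls_a) b)"

lemma deg_lf: "deg ps x = lf ps (\<lambda>b. if b = KA then 0 else Dv ps b) x"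
proof -
  have "euler ps v (x - (\<lambda>c. rk ps x * cls_a c)) = lf ps (\<lambda>b. if b = KA then 0 else ecoef ps v b) x" for v
  proof -
    have "euler ps v (x - (\<lambda>c. rk ps x * cls_a c)) = lf ps (ecoef ps v) x - of_int (x KA) * ecoef ps v KA"
      by (simp add: euler_lf lf_diff lf_smult rk_eq cls_a_def lf_kvec)
    also have "\<dots> = lf ps (\<lambda>b. if b = KA then 0 else ecoef ps v b) x"
      by (simp add: lf_def sum_kbasis)
    finally show ?thesis .
  qed
  then have "deg ps x = (\<Sum>j<wlcm ps. 1 * lf ps (\<lambda>b. if b = KA then 0 else ecoef ps ((coxeter ps ^^ j) cls_a) b) x)"
    by (simp add: deg_def)
  also have "\<dots> = lf ps (\<lambda>b. \<Sum>j<wlcm ps. 1 * (if b = KA then 0 else ecoef ps ((coxeter ps ^^ j) cls_a) b)) x"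
    by (rule lf_phi_sum)
  also have "(\<lambda>b. \<Sum>j<wlcm ps. 1 * (if b = KA then 0 else ecoef ps ((coxeter ps ^^ j) cls_a) b))
     = (\<lambda>b. if b = KA then 0 else Dv ps b)"
    by (auto simp: Dv_def fun_eq_iff)
  finally show ?thesis .
qed

lemma cox_pow_a_KA: "((coxeter ps ^^ j) cls_a) KA = 1"
  by (induction j) (auto simp: cls_a_def kvec_def)

lemma Dv_KP: "Dv ps KP = int (wlcm ps)"
  by (simp add: Dv_def ec_KP cox_pow_a_KA)

definition Hf :: "nat list \<Rightarrow> nat \<Rightarrow> nat \<Rightarrow> (kidx \<Rightarrow> int) \<Rightarrow> int" where
  "Hf ps i k v = (if k = 0 then v KA - v (KS i (ps!i - 1))
                  else v (KS i k) - (if 2 \<le> k then v (KS i (k-1)) else 0))"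

lemma H_cox: assumes w: "\<forall>i<length ps. 2 \<le> ps ! i" and i: "i < length ps" and k: "k < ps!i"
  shows "Hf ps i k (coxeter ps v) = Hf ps i (if k = 0 then ps!i - 1 else k - 1) v"
proof -
  have p: "2 \<le> ps!i" using w i by auto
  have last: "coxeter ps v (KS i (ps!i - 1)) = v KA + (if 2 \<le> ps!i - 1 then v (KS i (ps!i - 1 - 1)) else 0) - v (KS i (ps!i - 1))"
    using p by (intro cox_KS[OF w i]) auto
  show ?thesis
  proof (cases "k = 0")
    case True
    then show ?thesis using p last by (auto simp: Hf_def)
  next
    case False
    have ck: "coxeter ps v (KS i k) = v KA + (if 2 \<le> k then v (KS i (k-1)) else 0) - v (KS i (ps!i - 1))"
      using False k by (intro cox_KS[OF w i]) auto
    show ?thesis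
    proof (cases "2 \<le> k")
      case True
      have ck1: "coxeter ps v (KS i (k-1)) = v KA + (if 2 \<le> k - 1 then v (KS i (k-1-1)) else 0) - v (KS i (ps!i - 1))"
        using True k by (intro cox_KS[OF w i]) auto
      show ?thesis using True False ck ck1 by (auto simp: Hf_def)
    next
      case False
      then show ?thesis using \<open>k \<noteq> 0\<close> by (simp add: Hf_def ck)
    qed
  qed
qed

lemma H_pow: assumes w: "\<forall>i<length ps. 2 \<le> ps ! i" and i: "i < length ps"
  shows "\<forall>k<ps!i. Hf ps i k ((coxeter ps ^^ j) cls_a) = (if j mod ps!i = k then 1 else 0)"
proof (induction j)
  case 0
  have p: "2 \<le> ps!i" using w i by auto
  then show ?case by (auto simp: Hf_def cls_a_def kvec_def)
next
  case (Suc j)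
  have p: "2 \<le> ps!i" using w i by auto
  show ?case
  proof (intro allI impI)
    fix k assume k: "k < ps!i"
    have "Hf ps i k ((coxeter ps ^^ Suc j) cls_a) = Hf ps i (if k = 0 then ps!i - 1 else k - 1) ((coxeter ps ^^ j) cls_a)"
      using H_cox[OF w i k] by simp
    also have "\<dots> = (if j mod ps!i = (if k = 0 then ps!i - 1 else k - 1) then 1 else 0)"
      using Suc.IH p k by auto
    also have "\<dots> = (if Suc j mod ps!i = k then 1 else 0)"
    proof -
      have "j mod ps!i < ps!i" using p by auto
      then show ?thesis using k p by (auto simp: mod_Suc)
    qed
    finally show "Hf ps i k ((coxeter ps ^^ Suc j) cls_a) = (if Suc j mod ps!i = k then 1 else 0)" .
  qed
qed

lemma count_mod: assumes "k < n" shows "(\<Sum>j<n*q. if j mod n = k then 1 else 0 :: int) = int q"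
proof (induction q)
  case 0 then show ?case by simp
next
  case (Suc q)
  have "(\<Sum>j<n*Suc q. if j mod n = k then 1 else 0 :: int)
      = (\<Sum>j<n*q. if j mod n = k then 1 else 0) + (\<Sum>j\<in>{n*q..<n*q+n}. if j mod n = k then 1 else 0)"
    by (simp add: sum.atLeastLessThan_concat[symmetric] lessThan_atLeast0 add.commute)
  also have "(\<Sum>j\<in>{n*q..<n*q+n}. if j mod n = k then 1 else 0 :: int) = (\<Sum>l<n. if (l + n*q) mod n = k then 1 else 0)"
  proof -
    have e: "{n*q..<n*q+n} = {0 + n*q..<n + n*q}" by (simp add: add.commute)
    show ?thesis unfolding e sum.shift_bounds_nat_ivl by (simp add: lessThan_atLeast0)
  qed
  also have "\<dots> = (\<Sum>l<n. if l = k then 1 else 0)"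
    by (intro sum.cong) auto
  also have "\<dots> = 1" using assms by simp
  finally show ?case using Suc.IH by simp
qed


locale setup_ii =
  fixes ps :: "nat list"
  assumes w: "\<forall>i<length ps. 2 \<le> ps ! i"
    and odd_all: "\<forall>i<length ps. odd (ps ! i)"
begin

lemma wlcm_odd: "odd (wlcm ps)"
proof
  assume e: "even (wlcm ps)"
  have "wlcm ps dvd prod id (set ps)"
    unfolding wlcm_def by (rule Lcm_least) (auto intro: dvd_prodI)
  then have "even (prod id (set ps))" using e dvd_trans by blast
  then obtain a where "a \<in> set ps" "even a" by (auto simp: even_prod_iff)
  then show False using odd_all by (auto simp: in_set_conv_nth)
qed

lemma p_dvd: "i < length ps \<Longrightarrow> ps!i dvd wlcm ps"
  unfolding wlcm_def by (rule dvd_Lcm) simp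

lemma Dv_KS: assumes k: "i < length ps" "1 \<le> k" "k < ps!i"
  shows "odd (Dv ps (KS i k))"
proof -
  obtain q where q: "wlcm ps = ps!i * q" using p_dvd[OF k(1)] by auto
  have oq: "odd q" using wlcm_odd q by auto
  have "Dv ps (KS i k) = (\<Sum>j<wlcm ps. if j mod ps!i = k then 1 else 0)"
    unfolding Dv_def
  proof (intro sum.cong refl)
    fix j
    have "ecoef ps ((coxeter ps ^^ j) cls_a) (KS i k) = Hf ps i k ((coxeter ps ^^ j) cls_a)"
      using k by (simp add: ec_KS Hf_def)
    also have "\<dots> = (if j mod ps!i = k then 1 else 0)" using H_pow[OF w k(1)] k by simp
    finally show "ecoef ps ((coxeter ps ^^ j) cls_a) (KS i k) = (if j mod ps!i = k then 1 else 0)" .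
  qed
  also have "\<dots> = int q" unfolding q by (rule count_mod) (use k in simp)
  finally show ?thesis using oq by simp
qed

lemma deg2_lf: "deg2 ps = lf ps DC"
proof
  fix x
  have "deg2 ps x = lf ps (\<lambda>b. of_int (if b = KA then 0 else Dv ps b)) x"
    by (simp add: deg2_def deg_lf lf_of_int)
  also have "lf ps (\<lambda>b. of_int (if b = KA then 0 else Dv ps b)) = lf ps DC"
  proof (rule lf_cong)
    fix b assume b: "b \<in> kbasis ps"
    show "(of_int (if b = KA then 0 else Dv ps b) :: bit) = DC b"
    proof (cases b)
      case KA then show ?thesis by (simp add: DC_def)
    next
      case KP then show ?thesis using wlcm_odd by (simp add: DC_def Dv_KP of_int_bit)
    next
      case (KS i k) then show ?thesis using b Dv_KS[of i k] by (simp add: DC_def of_int_bit)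
    qed
  qed
  finally show "deg2 ps x = lf ps DC x" .
qed

lemma pm1_bit: "(of_nat (ps!i - 1) :: bit) = 0" if "i < length ps"
proof -
  have "odd (ps!i)" "2 \<le> ps!i" using odd_all w that by auto
  then have "even (ps!i - 1)" by simp
  then show ?thesis by (simp add: of_nat_bit)
qed

lemma pm1_bit': "(of_nat (ps!i - Suc 0) :: bit) = 0" if "i < length ps"
  using pm1_bit[OF that] by simp

lemma rowsum_const: "(\<Sum>k\<in>{1..<ps!i}. (a::bit)) = 0" if "i < length ps"
  using pm1_bit[OF that] by simp

lemma Ccond_RC: "Ccond ps RC"
  unfolding Ccond_def ball_kbasis
  by (auto simp: lf_cbA lf_cbP lf_kvec lf_sc RC_def simp del: coxeter_basis.simps(1,2))

lemma Ccond_DC: "Ccond ps DC"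
proof -
  have A: "DC KA + lf ps DC (coxeter_basis ps KA) = 0"
  proof -
    have "(\<Sum>i<length ps. \<Sum>j\<in>{1..<ps!i}. DC (KS i j)) = (\<Sum>i<length ps. 0)"
      by (intro sum.cong refl) (simp add: DC_def pm1_bit')
    then show ?thesis by (simp add: lf_cbA DC_def del: coxeter_basis.simps(1))
  qed
  have S: "DC (KS i j) + lf ps DC (coxeter_basis ps (KS i j)) = 0"
    if "i < length ps" "1 \<le> j" "j < ps!i" for i j
  proof -
    have p: "0 < ps!i" using that by auto
    show ?thesis using pm1_bit'[OF that(1)] by (simp add: lf_sc[OF p that(1)] DC_def)
  qed
  show ?thesis unfolding Ccond_def ball_kbasis using A S by (simp add: lf_kvec DC_def)
qed

lemma part_ii_unique:
  assumes K: "kills_image ps (linform2 ps phi)"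
  shows "\<exists>!c::bit \<times> bit. \<forall>x\<in>K0 ps. linform2 ps phi x = fst c * rk2 ps x + snd c * deg2 ps x"
proof -
  have C: "\<forall>b\<in>kbasis ps. phi b + lf ps phi (coxeter_basis ps b) = 0"
    using K by (simp add: linform2_lf kills_lf Ccond_def)
  have Sx: "phi (KS i j) + (if Suc j mod ps!i = 0 then phi KP - (\<Sum>k\<in>{1..<ps!i}. phi (KS i k)) else phi (KS i (Suc j mod ps!i))) = 0"
    if i: "i < length ps" "1 \<le> j" "j < ps!i" for i j
  proof -
    have p: "0 < ps!i" using i by auto
    have "phi (KS i j) + lf ps phi (coxeter_basis ps (KS i j)) = 0" using bspec[OF C, of "KS i j"] i by simp
    then show ?thesis by (auto simp: lf_sc[OF p i(1)])
  qed
  have const: "phi (KS i j) = phi (KS i 1)" if i: "i < length ps" and j: "1 \<le> j \<and> j < ps!i" for i j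
    using j
  proof (induction j)
    case 0 then show ?case by simp
  next
    case (Suc n)
    show ?case
    proof (cases "n = 0")
      case True then show ?thesis by simp
    next
      case False
      then have n: "1 \<le> n" "n < ps!i" "Suc n < ps!i" using Suc.prems by auto
      then have "phi (KS i n) + phi (KS i (Suc n)) = 0" using Sx[OF i n(1) n(2)] by simp
      then have h1: "phi (KS i n) = phi (KS i (Suc n))" by (rule bit_add_eq0)
      have h2: "phi (KS i n) = phi (KS i 1)" using Suc.IH n by simp
      show ?thesis by (simp only: h1[symmetric] h2)
    qed
  qed
  have allP: "phi (KS i j) = phi KP" if i: "i < length ps" "1 \<le> j" "j < ps!i" for i j
  proof -
    have p: "2 \<le> ps!i" using w i by auto
    have j': "1 \<le> ps!i - 1" "ps!i - 1 < ps!i" using p by auto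
    have "Suc (ps!i - 1) mod ps!i = 0" using p by simp
    then have e1: "phi (KS i (ps!i - 1)) + (phi KP - (\<Sum>k\<in>{1..<ps!i}. phi (KS i k))) = 0"
      using Sx[OF i(1) j'] by simp
    have "(\<Sum>k\<in>{1..<ps!i}. phi (KS i k)) = (\<Sum>k\<in>{1..<ps!i}. phi (KS i 1))"
      by (rule sum.cong[OF refl], rule const[OF i(1)]) simp
    also have "\<dots> = 0" by (rule rowsum_const[OF i(1)])
    finally have s0: "(\<Sum>k\<in>{1..<ps!i}. phi (KS i k)) = 0" .
    have c1: "phi (KS i (ps!i - 1)) = phi (KS i 1)" using const[OF i(1)] j' by blast
    have "phi (KS i 1) + phi KP = 0" using e1 unfolding s0 c1 by simp
    then have "phi (KS i 1) = phi KP" by (rule bit_add_eq0)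
    moreover have "phi (KS i j) = phi (KS i 1)" using const[OF i(1)] i by blast
    ultimately show ?thesis by simp
  qed
  show ?thesis
  proof (rule ex1I[where a = "(phi KA, phi KP)"])
    show "\<forall>x\<in>K0 ps. linform2 ps phi x = fst (phi KA, phi KP) * rk2 ps x + snd (phi KA, phi KP) * deg2 ps x"
    proof
      fix x
      have eq: "lf ps phi = lf ps (\<lambda>c. phi KA * RC c + phi KP * DC c)"
      proof (rule lf_cong)
        fix b assume b: "b \<in> kbasis ps"
        show "phi b = phi KA * RC b + phi KP * DC b"
          using b allP by (cases b) (auto simp: RC_def DC_def)
      qed
      then show "linform2 ps phi x = fst (phi KA, phi KP) * rk2 ps x + snd (phi KA, phi KP) * deg2 ps x"
        unfolding linform2_lf rk2_lf deg2_lf by (simp only: eq fst_conv snd_conv lf_comb)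
    qed
  next
    fix c :: "bit \<times> bit"
    assume c: "\<forall>x\<in>K0 ps. linform2 ps phi x = fst c * rk2 ps x + snd c * deg2 ps x"
    have "linform2 ps phi (kvec KA) = fst c * rk2 ps (kvec KA) + snd c * deg2 ps (kvec KA)"
      using c kvec_K0[of KA ps] by simp
    then have 1: "phi KA = fst c"
      by (simp add: linform2_lf rk2_lf deg2_lf lf_kvec RC_def DC_def)
    have "linform2 ps phi (kvec KP) = fst c * rk2 ps (kvec KP) + snd c * deg2 ps (kvec KP)"
      using c kvec_K0[of KP ps] by simp
    then have 2: "phi KP = snd c"
      by (simp add: linform2_lf rk2_lf deg2_lf lf_kvec RC_def DC_def)
    show "c = (phi KA, phi KP)" using 1 2 by (simp add: prod_eq_iff)
  qed
qed

end


theorem proposition3p10: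
  fixes ps :: "nat list" and r :: nat
  assumes weights: "\<forall>i<length ps. 2 \<le> ps ! i"
    and r_le: "r \<le> length ps"
    and evens: "\<forall>i<r. even (ps ! i)"
    and odds: "\<forall>i. r \<le> i \<and> i < length ps \<longrightarrow> odd (ps ! i)"
  shows "(1 \<le> r \<longrightarrow>
            (\<forall>k<r. kills_image ps (forms_i ps k)) \<and>
            (\<forall>phi. kills_image ps (linform ps phi) \<longrightarrow>
               (\<exists>!c::nat \<Rightarrow> int. (\<forall>k. r \<le> k \<longrightarrow> c k = 0) \<and>
                  (\<forall>x\<in>K0 ps. linform ps phi x = (\<Sum>k<r. c k * forms_i ps k x)))))
       \<and> (r = 0 \<longrightarrow>
            kills_image ps (rk2 ps) \<and> kills_image ps (deg2 ps) \<and>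
            (\<forall>phi. kills_image ps (linform2 ps phi) \<longrightarrow>
               (\<exists>!c::bit \<times> bit.
                  \<forall>x\<in>K0 ps. linform2 ps phi x = fst c * rk2 ps x + snd c * deg2 ps x)))"
proof (rule conjI; rule impI)
  assume r1: "1 \<le> r"
  interpret setup_i ps r using weights r_le evens odds r1 by unfold_locales
  show "(\<forall>k<r. kills_image ps (forms_i ps k)) \<and>
            (\<forall>phi. kills_image ps (linform ps phi) \<longrightarrow>
               (\<exists>!c::nat \<Rightarrow> int. (\<forall>k. r \<le> k \<longrightarrow> c k = 0) \<and>
                  (\<forall>x\<in>K0 ps. linform ps phi x = (\<Sum>k<r. c k * forms_i ps k x))))"
    using part_i_kills part_i_unique by blast
next
  assume r0: "r = 0"
  have oa: "\<forall>i<length ps. odd (ps ! i)" using odds r0 by auto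
  interpret setup_ii ps using weights oa by unfold_locales
  show "kills_image ps (rk2 ps) \<and> kills_image ps (deg2 ps) \<and>
            (\<forall>phi. kills_image ps (linform2 ps phi) \<longrightarrow>
               (\<exists>!c::bit \<times> bit.
                  \<forall>x\<in>K0 ps. linform2 ps phi x = fst c * rk2 ps x + snd c * deg2 ps x))"
    using Ccond_RC Ccond_DC part_ii_unique
    by (simp add: rk2_lf deg2_lf kills_lf)
qed

end
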